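(* Let $\theta>0$, $\nu\in\mathbb{C}$ with $\operatorname{Re}\nu>0$, and $s=\sigma+i\tau\in\mathbb{C}$. Then \[ |\Gamma(s,\theta,\nu)|\le 2^{\sigma}e^{-\operatorname{Re}(\nu)\theta/2}\,\Gamma\Big(\sigma,\frac{\theta}{2},\operatorname{Re}(\nu)\Big). \]
   Context: For $\nu$ with $\operatorname{Re}\nu>0$, $\theta>0$, $s\in\mathbb{C}$: $\Gamma(s,\theta,\nu)=\int_\theta^{+\infty}e^{-\nu y}y^{s-1}\,dy$. *)

theory Defs
  imports "HOL-Analysis.Analysis"
begin

definition inc_gamma :: "complex \<Rightarrow> real \<Rightarrow> complex \<Rightarrow> complex" where
  "inc_gamma s \<theta> \<nu> =
     integral {\<theta>..} (\<lambda>y::real. exp (- \<nu> * complex_of_real y) * complex_of_real y powr (s - 1))"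

end

theory Submission
  imports Defs
begin

lemma integrable_g:
  fixes a c k :: real
  assumes a: "a > 0" and c: "c > 0"
  shows "(\<lambda>x. exp (-a*x) * x powr k) integrable_on {c..}"
proof -
  have "((\<lambda>x. k * (ln x / x)) \<longlongrightarrow> k * 0) at_top"
    by (intro tendsto_intros ln_x_over_x_tendsto_0)
  hence "((\<lambda>x. (k * ln x) / x) \<longlongrightarrow> 0) at_top" by simp
  from order_tendstoD(2)[OF this, of "a/2"] and \<open>a > 0\<close>
    have "eventually (\<lambda>x. k * ln x / x < a/2) at_top" by simp
  from eventually_conj[OF this eventually_gt_at_top[of 0]]
    obtain x0 where x0: "\<forall>x\<ge>x0. k * ln x / x < a/2 \<and> x > 0"
      by (auto simp: eventually_at_top_linorder)
  define x1 where "x1 = max c x0"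
  have bnd: "exp (-a*x) * x powr k \<le> exp (-(a/2) * x)" if "x \<ge> x1" for x
  proof -
    from that x0 have x: "k * ln x / x < a / 2" "x > 0" by (auto simp: x1_def)
    have "x powr k = exp (k * ln x)"
      using \<open>x > 0\<close> by (simp add: powr_def)
    moreover from x have "k * ln x < (a * x) / 2" by (simp add: field_simps)
    ultimately have "exp (-a*x) * x powr k = exp (k * ln x - a*x)" by (simp add: exp_add[symmetric])
    also have "\<dots> \<le> exp (-(a/2) * x)" using \<open>k * ln x < (a * x) / 2\<close> by simp
    finally show ?thesis .
  qed
  have "x1 > 0" using c by (simp add: x1_def)
  have A: "(\<lambda>x. exp (-a*x) * x powr k) integrable_on {c..x1}"
    by (rule integrable_continuous_interval) (use c in \<open>auto intro!: continuous_intros\<close>)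
  have B: "(\<lambda>x. exp (-a*x) * x powr k) integrable_on {x1..}"
  proof (rule measurable_bounded_by_integrable_imp_integrable)
    show "(\<lambda>x. exp (-a*x) * x powr k) \<in> borel_measurable (lebesgue_on {x1..})"
      by (rule continuous_imp_measurable_on_sets_lebesgue) (use \<open>x1 > 0\<close> in \<open>auto intro!: continuous_intros\<close>)
    show "(\<lambda>x. exp (-(a/2) * x)) integrable_on {x1..}"
      using integrable_on_exp_minus_to_infinity[of "a/2" x1] a by simp
    show "norm (exp (-a*x) * x powr k) \<le> exp (-(a/2) * x)" if "x \<in> {x1..}" for x
      using bnd[of x] that by simp
  qed auto
  show ?thesis
    by (rule integrable_Un'[OF A B]) (auto simp: x1_def)
qed


theorem lemma4p11:
  fixes \<theta> :: real and \<nu> s :: complex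
  assumes "\<theta> > 0" and "Re \<nu> > 0"
  shows "cmod (inc_gamma s \<theta> \<nu>)
           \<le> 2 powr (Re s) * exp (- Re \<nu> * \<theta> / 2)
              * Re (inc_gamma (complex_of_real (Re s)) (\<theta> / 2) (complex_of_real (Re \<nu>)))"
proof -
  define a where "a = Re \<nu>"
  define \<sigma> where "\<sigma> = Re s"
  define c where "c = \<theta> / 2"
  have a: "a > 0" and c: "c > 0" using assms by (auto simp: a_def c_def)
  define g where "g = (\<lambda>x. exp (-a*x) * x powr (\<sigma> - 1))"
  define I where "I = integral {c..} g"
  have gint: "g integrable_on {c..}" unfolding g_def by (rule integrable_g[OF a c])
  have gnn: "g x \<ge> 0" for x by (simp add: g_def)
  have rhs: "Re (inc_gamma (complex_of_real (Re s)) (\<theta> / 2) (complex_of_real (Re \<nu>))) = I"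
  proof -
    have "inc_gamma (complex_of_real (Re s)) (\<theta> / 2) (complex_of_real (Re \<nu>))
          = integral {c..} (\<lambda>y. complex_of_real (g y))"
      unfolding inc_gamma_def c_def[symmetric]
    proof (rule integral_cong)
      fix y assume "y \<in> {c..}"
      then have "y > 0" using c by simp
      then show "exp (- complex_of_real (Re \<nu>) * complex_of_real y) * complex_of_real y powr (complex_of_real (Re s) - 1)
          = complex_of_real (g y)"
        by (simp add: g_def a_def \<sigma>_def powr_of_real[symmetric] exp_of_real[symmetric])
    qed
    also have "\<dots> = complex_of_real I"
      unfolding I_def using has_integral_of_real[OF integrable_integral[OF gint]]
      by (rule integral_unique)
    finally show ?thesis by simp
  qed
  have Inn: "I \<ge> 0" unfolding I_def by (rule integral_nonneg[OF gint]) (simp add: gnn)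
  have stretch: "((\<lambda>y. g (y/2)) has_integral (2 * I)) {\<theta>..}"
  proof -
    have "g absolutely_integrable_on {c..}"
      by (rule nonnegative_absolutely_integrable_1[OF gint]) (simp add: gnn)
    then have "integrable lebesgue (\<lambda>x. indicator {c..} x *\<^sub>R g x)"
      by (simp add: set_integrable_def)
    moreover have "(\<integral>x. indicator {c..} x *\<^sub>R g x \<partial>lebesgue) = I"
      using set_lebesgue_integral_eq_integral(2)[OF \<open>g absolutely_integrable_on {c..}\<close>]
      by (simp add: set_lebesgue_integral_def I_def)
    ultimately have "has_bochner_integral lebesgue (\<lambda>x. indicator {c..} x *\<^sub>R g x) I"
      by (simp add: has_bochner_integral_iff)
    then have "has_bochner_integral lebesgue (\<lambda>x. indicator {c..} (0 + 1/2 * x) *\<^sub>R g (0 + 1/2 * x)) (I /\<^sub>R \<bar>1/2\<bar>)"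
      using has_bochner_integral_lebesgue_real_affine_iff[of "1/2" "\<lambda>x. indicator {c..} x *\<^sub>R g x" I 0]
      by simp
    then have "has_bochner_integral lebesgue (\<lambda>x. if x \<in> {\<theta>..} then g (x/2) else 0) (2 * I)"
      by (rule has_bochner_integral_cong[THEN iffD1, rotated 3])
         (auto simp: indicator_def c_def)
    then have "((\<lambda>x. if x \<in> {\<theta>..} then g (x/2) else 0) has_integral (2 * I)) UNIV"
      using has_integral_integral_lebesgue has_bochner_integral_iff by metis
    then show ?thesis using has_integral_restrict_UNIV[of "{\<theta>..}" "\<lambda>y. g (y/2)" "2 * I"] by simp
  qed
  define F where "F = (\<lambda>y::real. exp (- \<nu> * complex_of_real y) * complex_of_real y powr (s - 1))"
  define h where "h = (\<lambda>y. exp (-a*\<theta>/2) * 2 powr (\<sigma>-1) * g (y/2))"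
  have hint: "(h has_integral (exp (-a*\<theta>/2) * 2 powr (\<sigma>-1) * (2 * I))) {\<theta>..}"
    unfolding h_def by (rule has_integral_mult_right[OF stretch])
  have normF: "norm (F y) \<le> h y" if "y \<in> {\<theta>..}" for y
  proof -
    have y: "y > 0" "y \<ge> \<theta>" using that assms by auto
    have "norm (F y) = exp (-a*y) * y powr (\<sigma> - 1)"
      using y by (simp add: F_def norm_mult norm_powr_real_powr a_def \<sigma>_def)
    also have "\<dots> = exp (-a*y/2) * exp (-a*y/2) * y powr (\<sigma> - 1)"
      by (simp add: exp_add[symmetric])
    also have "\<dots> \<le> exp (-a*\<theta>/2) * exp (-a*y/2) * y powr (\<sigma> - 1)"
      using y a by (intro mult_right_mono) (auto simp: mult_left_mono)
    also have "\<dots> = h y"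
      using y by (simp add: h_def g_def powr_divide powr_diff)
    finally show ?thesis .
  qed
  have Fint: "F integrable_on {\<theta>..}"
  proof (rule measurable_bounded_by_integrable_imp_integrable[OF _ _ normF])
    show "F \<in> borel_measurable (lebesgue_on {\<theta>..})"
      unfolding F_def
      by (rule continuous_imp_measurable_on_sets_lebesgue) (use assms in \<open>auto intro!: continuous_intros\<close>)
    show "h integrable_on {\<theta>..}" using hint by blast
  qed auto
  have "cmod (inc_gamma s \<theta> \<nu>) = norm (integral {\<theta>..} F)"
    by (simp add: inc_gamma_def F_def)
  also have "\<dots> \<le> integral {\<theta>..} h"
    by (rule integral_norm_bound_integral[OF Fint _ normF]) (use hint in blast)+
  also have "\<dots> = exp (-a*\<theta>/2) * 2 powr (\<sigma>-1) * (2 * I)"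
    using hint by (rule integral_unique)
  also have "\<dots> = 2 powr \<sigma> * exp (-a*\<theta>/2) * I"
    by (simp add: powr_diff)
  finally show ?thesis by (simp add: rhs a_def \<sigma>_def)
qed

end
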